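(* For every $t\le0$, the limit $\lim_{n\to\infty}\frac1n\log\mathbb{E}\big(e^{tH_n}\big)$ exists.
   Context: Standing setup (discrete-time Hawkes process, DTHP). Let $(a_i)_{i=0}^\infty$ be a sequence of strictly positive real numbers with $\sum_{i=0}^\infty a_i<1$ and $\sum_{i=1}^\infty i\,a_i<\infty$. The arrival process $\{\xi_n\}_{n\ge1}$ is a sequence of $\{0,1\}$-valued random variables on a probability space $(\Omega,\mathcal F,\mathbb P)$ with $\mathbb{P}(\xi_1=1)=a_0$, $\mathbb P(\xi_1=0)=1-a_0$, and for $n\ge2$, $$\mathbb{P}(\xi_n=1\mid \xi_1,\dots,\xi_{n-1})=a_0+\sum_{i=1}^{n-1}a_{n-i}\xi_i,\qquad \mathbb{P}(\xi_n=0\mid \xi_1,\dots,\xi_{n-1})=1-\Big(a_0+\sum_{i=1}^{n-1}a_{n-i}\xi_i\Big).$$ The DTHP is $H_n=\sum_{i=1}^n\xi_i$, and $\mathcal F_n=\sigma(\xi_1,\dots,\xi_n)$. *)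

theory Defs
  imports "HOL-Probability.Probability"
begin

text \<open>The arrivals are indexed from 1; the value
  of xi at index 0 is irrelevant. The conditional law of xi n given
  xi 1, ..., xi (n-1) (a discrete conditioning) is stated elementarily:
  for every 0/1-pattern x of the first n-1 arrivals,
  P(pattern x and xi n = 1) = (a 0 + sum a(n-i) x i) * P(pattern x).\<close>

definition dthp :: "'w measure \<Rightarrow> (nat \<Rightarrow> real) \<Rightarrow> (nat \<Rightarrow> 'w \<Rightarrow> real) \<Rightarrow> bool" where
  "dthp M a \<xi> \<longleftrightarrow>
     prob_space M \<and>
     (\<forall>n\<ge>1. \<xi> n \<in> borel_measurable M) \<and>
     (\<forall>n\<ge>1. \<forall>\<omega>\<in>space M. \<xi> n \<omega> \<in> {0, 1}) \<and>
     (\<forall>n\<ge>1. \<forall>x :: nat \<Rightarrow> real. (\<forall>i\<in>{1..<n}. x i \<in> {0, 1}) \<longrightarrow>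
        measure M {\<omega>\<in>space M. (\<forall>i\<in>{1..<n}. \<xi> i \<omega> = x i) \<and> \<xi> n \<omega> = 1}
        = (a 0 + (\<Sum>i=1..<n. a (n - i) * x i))
          * measure M {\<omega>\<in>space M. \<forall>i\<in>{1..<n}. \<xi> i \<omega> = x i})"

definition hawkes_H :: "(nat \<Rightarrow> 'w \<Rightarrow> real) \<Rightarrow> nat \<Rightarrow> 'w \<Rightarrow> real" where
  "hawkes_H \<xi> n \<omega> = (\<Sum>i=1..n. \<xi> i \<omega>)"

end

theory Submission
  imports Defs
begin


lemma subadd_mult:
  fixes g :: "nat \<Rightarrow> real"
  assumes sub: "\<And>m n. g (m+n) \<le> g m + g n"
  shows "g (q*k + r) \<le> real q * g k + g r"
proof (induction q)
  case 0 then show ?case by simp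
next
  case (Suc q)
  have "g (Suc q * k + r) = g (k + (q*k + r))" by (simp add: add.assoc)
  also have "\<dots> \<le> g k + g (q*k+r)" by (rule sub)
  also have "\<dots> \<le> real (Suc q) * g k + g r" using Suc by (simp add: algebra_simps)
  finally show ?case .
qed

lemma fekete:
  fixes f :: "nat \<Rightarrow> real"
  assumes sub: "\<And>m n. f (m+n) \<le> f m + f n" and lb: "\<And>n. f n \<ge> c * real n"
  shows "convergent (\<lambda>n. f n / real n)"
proof -
  define S where "S = {f n / real n | n. n \<ge> 1}"
  define L where "L = Inf S"
  have Sne: "S \<noteq> {}" unfolding S_def by auto
  have bdd: "bdd_below S" unfolding S_def bdd_below_def
  proof (intro exI[of _ c] ballI)
    fix x assume "x \<in> {f n / real n |n. 1 \<le> n}"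
    then obtain n where n: "n \<ge> 1" "x = f n / real n" by auto
    then show "c \<le> x" using lb[of n] by (simp add: pos_le_divide_eq)
  qed
  have Lle: "L \<le> f n / real n" if "n \<ge> 1" for n
    unfolding L_def using bdd that by (intro cInf_lower) (auto simp: S_def)
  define g where "g n = f n - L * real n" for n
  have gsub: "g (m+n) \<le> g m + g n" for m n
    using sub[of m n] by (simp add: g_def algebra_simps)
  have gnn: "g n \<ge> 0" if "n \<ge> 1" for n
    using Lle[OF that] that by (simp add: g_def field_simps)
  have "(\<lambda>n. f n / real n) \<longlonglongrightarrow> L"
  proof (rule LIMSEQ_I)
    fix r :: real assume r: "r > 0"
    have "L < L + r/2" using r by simp
    then obtain x where "x \<in> S" "x < L + r/2"
      using cInf_lessD[OF Sne] unfolding L_def by (metis L_def)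
    then obtain k where k: "k \<ge> 1" "f k / real k < L + r/2" unfolding S_def by auto
    have gk: "g k < r/2 * real k" using k by (simp add: g_def field_simps)
    define Mx where "Mx = (\<Sum>i<k. \<bar>g i\<bar>)"
    have Mx: "g i \<le> Mx" if "i < k" for i
    proof -
      have "\<bar>g i\<bar> \<le> Mx" unfolding Mx_def using that
        by (intro member_le_sum) auto
      then show ?thesis by simp
    qed
    have Mx0: "Mx \<ge> 0" unfolding Mx_def by (intro sum_nonneg) auto
    obtain N :: nat where N: "real N > 2 * Mx / r" using reals_Archimedean2 by blast
    show "\<exists>no. \<forall>n\<ge>no. norm (f n / real n - L) < r"
    proof (intro exI[of _ "max N 1"] allI impI)
      fix n assume n: "n \<ge> max N 1"
      define q where "q = n div k"
      define s where "s = n mod k"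
      have ns: "n = q * k + s" unfolding q_def s_def by simp
      have sk: "s < k" unfolding s_def using k by simp
      have "g n \<le> real q * g k + g s" using subadd_mult[of g, OF gsub] ns by metis
      also have "\<dots> \<le> real q * (r/2 * real k) + Mx"
        using gk Mx[OF sk] by (intro add_mono mult_left_mono) auto
      finally have g0: "g n \<le> real q * (r/2 * real k) + Mx" .
      have "real q * (r/2 * real k) \<le> r/2 * real n"
      proof -
        have "real q * real k \<le> real n" using ns by (metis le_add1 of_nat_le_iff of_nat_mult)
        then show ?thesis using r by (simp add: algebra_simps)
      qed
      then have g1: "g n \<le> r/2 * real n + Mx" using g0 by linarith
      have n1: "real n \<ge> 1" and nN: "real n \<ge> real N" using n by auto
      have "r * real N \<le> r * real n" using nN r by simp
      moreover have "2 * Mx < r * real N" using N r by (simp add: field_simps)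
      ultimately have "Mx < r/2 * real n" by linarith
      then have "g n < r * real n" using g1 by linarith
      moreover have "g n \<ge> 0" using gnn n by simp
      moreover have "f n / real n - L = g n / real n" using n1 by (simp add: g_def field_simps)
      ultimately show "norm (f n / real n - L) < r" using n1 by (simp add: field_simps)
    qed
  qed
  then show ?thesis by (rule convergentI)
qed


fun Wf :: "(nat \<Rightarrow> real) \<Rightarrow> real \<Rightarrow> (nat \<Rightarrow> real) \<Rightarrow> nat \<Rightarrow> real" where
  "Wf a t b 0 = 1"
| "Wf a t b (Suc m) = (1 - (a 0 + b 1)) * Wf a t (\<lambda>j. b (Suc j)) m
     + (a 0 + b 1) * exp t * Wf a t (\<lambda>j. b (Suc j) + a j) m"

definition tl_sum :: "(nat \<Rightarrow> real) \<Rightarrow> nat \<Rightarrow> real" where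
  "tl_sum a j = (\<Sum>i. a (i + j))"

definition valid :: "(nat \<Rightarrow> real) \<Rightarrow> (nat \<Rightarrow> real) \<Rightarrow> bool" where
  "valid a b \<longleftrightarrow> (\<forall>j. 0 \<le> b j \<and> b j \<le> tl_sum a j)"

locale kern =
  fixes a :: "nat \<Rightarrow> real" and t :: real
  assumes a_pos: "\<And>i. a i > 0" and a_summable: "summable a" and a_sum: "(\<Sum>i. a i) < 1"
    and t_nonpos: "t \<le> 0"
begin

lemma tl_step: "tl_sum a j = a j + tl_sum a (Suc j)"
proof -
  have s: "summable (\<lambda>i. a (i + j))" using a_summable by (simp add: summable_iff_shift)
  show ?thesis using suminf_split_head[OF s] unfolding tl_sum_def by simp
qed

lemma tl0: "tl_sum a 0 < 1" using a_sum by (simp add: tl_sum_def)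

lemma valid_zero: "valid a (\<lambda>_. 0)"
proof -
  have "0 \<le> tl_sum a j" for j
  proof -
    have s: "summable (\<lambda>i. a (i + j))" using a_summable by (simp add: summable_iff_shift)
    show ?thesis unfolding tl_sum_def using s a_pos by (intro suminf_nonneg) (auto intro: less_imp_le)
  qed
  then show ?thesis by (simp add: valid_def)
qed

lemma valid_q: assumes "valid a b" shows "0 < a 0 + b 1" "a 0 + b 1 < 1"
proof -
  show "0 < a 0 + b 1" using assms a_pos[of 0] by (simp add: valid_def add_pos_nonneg)
  have "b 1 \<le> tl_sum a 1" using assms by (simp add: valid_def)
  then show "a 0 + b 1 < 1" using tl_step[of 0] tl0 by simp
qed

lemma valid_sh0: assumes "valid a b" shows "valid a (\<lambda>j. b (Suc j))"
  unfolding valid_def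
proof (intro allI conjI)
  fix j
  show "0 \<le> b (Suc j)" using assms by (simp add: valid_def)
  have "b (Suc j) \<le> tl_sum a (Suc j)" using assms by (simp add: valid_def)
  then show "b (Suc j) \<le> tl_sum a j" using tl_step[of j] a_pos[of j] by linarith
qed

lemma valid_sh1: assumes "valid a b" shows "valid a (\<lambda>j. b (Suc j) + a j)"
  unfolding valid_def
proof (intro allI conjI)
  fix j
  show "0 \<le> b (Suc j) + a j" using assms a_pos[of j] by (simp add: valid_def add_nonneg_nonneg less_imp_le)
  have "b (Suc j) \<le> tl_sum a (Suc j)" using assms by (simp add: valid_def)
  then show "b (Suc j) + a j \<le> tl_sum a j" using tl_step[of j] by linarith
qed

lemma W_bounds: "valid a b \<Longrightarrow> exp (t * real m) \<le> Wf a t b m \<and> Wf a t b m \<le> 1"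
proof (induction m arbitrary: b)
  case 0 then show ?case by simp
next
  case (Suc m)
  define q where "q = a 0 + b 1"
  define A where "A = Wf a t (\<lambda>j. b (Suc j)) m"
  define B where "B = Wf a t (\<lambda>j. b (Suc j) + a j) m"
  have q: "0 < q" "q < 1" using valid_q[OF Suc.prems] by (auto simp: q_def)
  have A: "exp (t * real m) \<le> A" "A \<le> 1" using Suc.IH[OF valid_sh0[OF Suc.prems]] by (auto simp: A_def)
  have B: "exp (t * real m) \<le> B" "B \<le> 1" using Suc.IH[OF valid_sh1[OF Suc.prems]] by (auto simp: B_def)
  have A0: "0 \<le> A" using A(1) by (meson exp_ge_zero order_trans)
  have B0: "0 \<le> B" using B(1) by (meson exp_ge_zero order_trans)
  have W: "Wf a t b (Suc m) = (1 - q) * A + q * exp t * B" by (simp add: q_def A_def B_def)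
  have et: "exp t \<le> 1" "0 < exp t" using t_nonpos by auto
  have e: "exp (t * real (Suc m)) = exp t * exp (t * real m)" by (simp add: algebra_simps mult_exp_exp)
  have e2: "exp t * exp (t * real m) \<le> exp (t * real m)" using et by simp
  have "exp (t * real (Suc m)) \<le> (1 - q) * exp (t * real m) + q * (exp t * exp (t * real m))"
  proof -
    have "(1-q)*(exp t * exp (t * real m)) \<le> (1-q)*exp (t * real m)"
      using e2 q by (intro mult_left_mono) auto
    then show ?thesis unfolding e by (simp add: algebra_simps)
  qed
  also have "\<dots> \<le> (1 - q) * A + q * exp t * B"
    using q A B et by (simp add: mult.assoc) (intro add_mono mult_left_mono; simp)
  finally have lo: "exp (t * real (Suc m)) \<le> Wf a t b (Suc m)" using W by simp
  have "(1 - q) * A + q * exp t * B \<le> (1 - q) * 1 + q * 1 * 1"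
    using q A B et A0 B0 by (intro add_mono mult_left_mono mult_mono) auto
  then show ?case using lo W by simp
qed

lemma W_mono: "valid a b \<Longrightarrow> valid a b' \<Longrightarrow> (\<forall>j. b j \<le> b' j) \<Longrightarrow> Wf a t b' m \<le> Wf a t b m"
proof (induction m arbitrary: b b')
  case 0 then show ?case by simp
next
  case (Suc m)
  define q where "q = a 0 + b 1"
  define A where "A = Wf a t (\<lambda>j. b (Suc j)) m"
  define B where "B = Wf a t (\<lambda>j. b (Suc j) + a j) m"
  define q' where "q' = a 0 + b' 1"
  define A' where "A' = Wf a t (\<lambda>j. b' (Suc j)) m"
  define B' where "B' = Wf a t (\<lambda>j. b' (Suc j) + a j) m"
  have q: "0 < q" "q < 1" using valid_q[OF Suc.prems(1)] by (auto simp: q_def)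
  have q': "0 < q'" "q' < 1" using valid_q[OF Suc.prems(2)] by (auto simp: q'_def)
  have qq: "q \<le> q'" using Suc.prems(3) by (simp add: q_def q'_def)
  have v1: "valid a (\<lambda>j. b (Suc j))" "valid a (\<lambda>j. b (Suc j) + a j)"
    "valid a (\<lambda>j. b' (Suc j))" "valid a (\<lambda>j. b' (Suc j) + a j)"
    using valid_sh0 valid_sh1 Suc.prems by auto
  have AA: "A' \<le> A" unfolding A_def A'_def using Suc.prems(3) by (intro Suc.IH v1) auto
  have BB: "B' \<le> B" unfolding B_def B'_def using Suc.prems(3) by (intro Suc.IH v1) auto
  have BA': "B' \<le> A'" unfolding B'_def A'_def using a_pos by (intro Suc.IH v1) (auto intro: less_imp_le)
  have B'0: "0 \<le> B'" using W_bounds[OF v1(4), of m] unfolding B'_def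
    by (meson exp_ge_zero order_trans)
  have et: "exp t \<le> 1" "0 < exp t" using t_nonpos by auto
  have d: "0 \<le> A' - exp t * B'" using BA' B'0 et
    by (smt (verit) mult_left_le_one_le)
  have "(1 - q') * A' + q' * exp t * B' = A' - q' * (A' - exp t * B')" by (simp add: algebra_simps)
  also have "\<dots> \<le> A' - q * (A' - exp t * B')" using qq d by (simp add: mult_right_mono)
  also have "\<dots> = (1 - q) * A' + q * exp t * B'" by (simp add: algebra_simps)
  also have "\<dots> \<le> (1 - q) * A + q * exp t * B"
    using q AA BB et by (simp add: mult.assoc) (intro add_mono mult_left_mono; simp)
  finally show ?case by (simp add: q_def q'_def A_def B_def A'_def B'_def)
qed

lemma W_sub: "valid a b \<Longrightarrow> Wf a t b (n + m) \<le> Wf a t b n * Wf a t (\<lambda>_. 0) m"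
proof (induction n arbitrary: b)
  case 0
  then show ?case using W_mono[OF valid_zero 0] by (simp add: valid_def)
next
  case (Suc n)
  define q where "q = a 0 + b 1"
  have q: "0 < q" "q < 1" using valid_q[OF Suc.prems] by (auto simp: q_def)
  have et: "0 < exp t" by simp
  have "Wf a t b (Suc n + m) = (1 - q) * Wf a t (\<lambda>j. b (Suc j)) (n + m)
     + q * exp t * Wf a t (\<lambda>j. b (Suc j) + a j) (n + m)" by (simp add: q_def)
  also have "\<dots> \<le> (1 - q) * (Wf a t (\<lambda>j. b (Suc j)) n * Wf a t (\<lambda>_. 0) m)
     + q * exp t * (Wf a t (\<lambda>j. b (Suc j) + a j) n * Wf a t (\<lambda>_. 0) m)"
    using q et Suc.IH[OF valid_sh0[OF Suc.prems]] Suc.IH[OF valid_sh1[OF Suc.prems]]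
    by (intro add_mono mult_left_mono) auto
  also have "\<dots> = Wf a t b (Suc n) * Wf a t (\<lambda>_. 0) m" by (simp add: q_def algebra_simps)
  finally show ?case .
qed

end


locale hawk = kern a t + prob_space M
  for a :: "nat \<Rightarrow> real" and t :: real and M :: "'w measure" +
  fixes \<xi> :: "nat \<Rightarrow> 'w \<Rightarrow> real"
  assumes hk: "dthp M a \<xi>"
begin

definition C :: "nat \<Rightarrow> (nat \<Rightarrow> real) \<Rightarrow> 'w set" where
  "C n x = {\<omega>\<in>space M. \<forall>i\<in>{1..n}. \<xi> i \<omega> = x i}"

definition bx :: "(nat \<Rightarrow> real) \<Rightarrow> nat \<Rightarrow> nat \<Rightarrow> real" where
  "bx x n j = (\<Sum>i=1..n. a (n + j - i) * x i)"

abbreviation H where "H \<equiv> hawkes_H \<xi>"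

lemma xi_meas: "i \<ge> 1 \<Longrightarrow> \<xi> i \<in> borel_measurable M"
  using hk by (simp add: dthp_def)

lemma xi_val: "i \<ge> 1 \<Longrightarrow> \<omega> \<in> space M \<Longrightarrow> \<xi> i \<omega> = 0 \<or> \<xi> i \<omega> = 1"
  using hk by (auto simp: dthp_def)

lemma H_meas: "H k \<in> borel_measurable M"
  unfolding hawkes_H_def[abs_def] by (intro borel_measurable_sum xi_meas) auto

lemma H_Suc: "H (Suc k) \<omega> = H k \<omega> + \<xi> (Suc k) \<omega>"
  by (simp add: hawkes_H_def)

lemma H_0: "H 0 \<omega> = 0" by (simp add: hawkes_H_def)

lemma H_mono: "\<omega> \<in> space M \<Longrightarrow> H n \<omega> \<le> H (n + m) \<omega>"
proof (induction m)
  case 0 then show ?case by simp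
next
  case (Suc m)
  have "\<xi> (Suc (n+m)) \<omega> \<ge> 0" using xi_val[of "Suc (n+m)" \<omega>] Suc.prems by auto
  then show ?case using Suc H_Suc[of "n+m" \<omega>] by simp
qed

lemma C_sets: "C n x \<in> sets M"
proof -
  have "C n x = {\<omega>\<in>space M. \<forall>i\<in>{1..n}. \<xi> i \<omega> = x i}" by (simp add: C_def)
  also have "\<dots> \<in> sets M"
  proof (intro sets.sets_Collect_finite_All)
    fix i assume "i \<in> {1..n}"
    then have "\<xi> i \<in> borel_measurable M" using xi_meas by auto
    then show "{\<omega> \<in> space M. \<xi> i \<omega> = x i} \<in> sets M" by measurable
  qed auto
  finally show ?thesis .
qed

lemma C_Suc: "C (Suc n) (x(Suc n := v)) = {\<omega>\<in>space M. (\<forall>i\<in>{1..n}. \<xi> i \<omega> = x i) \<and> \<xi> (Suc n) \<omega> = v}"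
  unfolding C_def by (auto simp: atLeastAtMostSuc_conv)

lemma C_0: "C 0 x = space M" by (simp add: C_def)

lemma meas_C1:
  assumes x01: "\<forall>i\<in>{1..n}. x i \<in> {0,1}"
  shows "measure M (C (Suc n) (x(Suc n := 1))) = (a 0 + bx x n 1) * measure M (C n x)"
proof -
  have h: "\<forall>n\<ge>1. \<forall>x :: nat \<Rightarrow> real. (\<forall>i\<in>{1..<n}. x i \<in> {0, 1}) \<longrightarrow>
        measure M {\<omega>\<in>space M. (\<forall>i\<in>{1..<n}. \<xi> i \<omega> = x i) \<and> \<xi> n \<omega> = 1}
        = (a 0 + (\<Sum>i=1..<n. a (n - i) * x i))
          * measure M {\<omega>\<in>space M. \<forall>i\<in>{1..<n}. \<xi> i \<omega> = x i}"
    using hk unfolding dthp_def by (elim conjE)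
  have x01': "\<forall>i\<in>{1..<Suc n}. x i \<in> {0,1}" using x01 by (simp add: atLeastLessThanSuc_atLeastAtMost)
  have e: "measure M {\<omega>\<in>space M. (\<forall>i\<in>{1..<Suc n}. \<xi> i \<omega> = x i) \<and> \<xi> (Suc n) \<omega> = 1}
        = (a 0 + (\<Sum>i=1..<Suc n. a (Suc n - i) * x i))
          * measure M {\<omega>\<in>space M. \<forall>i\<in>{1..<Suc n}. \<xi> i \<omega> = x i}"
    using spec[OF mp[OF spec[OF h, of "Suc n"]], of x] x01' by simp
  have bx1: "bx x n 1 = (\<Sum>i=1..<Suc n. a (Suc n - i) * x i)"
    unfolding bx_def by (simp add: atLeastLessThanSuc_atLeastAtMost)
  show ?thesis using e unfolding C_Suc bx1 by (simp add: C_def atLeastLessThanSuc_atLeastAtMost)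
qed

lemma C_split: "C n x = C (Suc n) (x(Suc n := 0)) \<union> C (Suc n) (x(Suc n := 1))"
  "C (Suc n) (x(Suc n := 0)) \<inter> C (Suc n) (x(Suc n := 1)) = {}"
  unfolding C_Suc using xi_val[of "Suc n"] by (auto simp: C_def)

lemma meas_C0:
  assumes x01: "\<forall>i\<in>{1..n}. x i \<in> {0,1}"
  shows "measure M (C (Suc n) (x(Suc n := 0))) = (1 - (a 0 + bx x n 1)) * measure M (C n x)"
proof -
  have "measure M (C n x) = measure M (C (Suc n) (x(Suc n := 0))) + measure M (C (Suc n) (x(Suc n := 1)))"
    by (subst C_split(1)) (intro finite_measure_Union C_sets C_split(2))
  then show ?thesis using meas_C1[OF x01] by (simp add: algebra_simps)
qed

lemma bx_0: "bx (x(Suc n := 0)) (Suc n) = (\<lambda>j. bx x n (Suc j))"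
  unfolding bx_def by (intro ext) (auto intro!: sum.cong)

lemma bx_1: "bx (x(Suc n := 1)) (Suc n) = (\<lambda>j. bx x n (Suc j) + a j)"
  unfolding bx_def by (intro ext) (auto intro!: sum.cong)

lemma bx_zero: "bx x 0 = (\<lambda>_. 0)"
  unfolding bx_def by (intro ext) simp

lemma integ: "integrable M (\<lambda>\<omega>. indicator (C n x) \<omega> * exp (t * (H (n + m) \<omega> - H n \<omega>)))"
proof (rule integrable_const_bound[where B=1])
  show "AE \<omega> in M. norm (indicator (C n x) \<omega> * exp (t * (H (n + m) \<omega> - H n \<omega>))) \<le> (1::real)"
  proof (rule AE_I2)
    fix \<omega> assume w: "\<omega> \<in> space M"
    have "t * (H (n + m) \<omega> - H n \<omega>) \<le> 0" using H_mono[OF w, of n m] t_nonpos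
      by (simp add: mult_nonpos_nonneg)
    then have "exp (t * (H (n + m) \<omega> - H n \<omega>)) \<le> 1" by simp
    then show "norm (indicator (C n x) \<omega> * exp (t * (H (n + m) \<omega> - H n \<omega>))) \<le> (1::real)"
      by (simp add: indicator_def)
  qed
  show "(\<lambda>\<omega>. indicator (C n x) \<omega> * exp (t * (H (n + m) \<omega> - H n \<omega>))) \<in> borel_measurable M"
    using H_meas C_sets by measurable
qed

lemma main_ind:
  "\<forall>i\<in>{1..n}. x i \<in> {0,1} \<Longrightarrow>
   (\<integral>\<omega>. indicator (C n x) \<omega> * exp (t * (H (n + m) \<omega> - H n \<omega>)) \<partial>M)
     = measure M (C n x) * Wf a t (bx x n) m"
proof (induction m arbitrary: n x)
  case 0
  then show ?case using C_sets by (simp add: Int_absorb2 sets.sets_into_space)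
next
  case (Suc m)
  define x0 where "x0 = x(Suc n := 0)"
  define x1 where "x1 = x(Suc n := 1)"
  have x0v: "\<forall>i\<in>{1..Suc n}. x0 i \<in> {0,1}" using Suc.prems by (auto simp: x0_def)
  have x1v: "\<forall>i\<in>{1..Suc n}. x1 i \<in> {0,1}" using Suc.prems by (auto simp: x1_def)
  define f where "f = (\<lambda>\<omega>. exp (t * (H (Suc n + m) \<omega> - H (Suc n) \<omega>)))"
  have pt: "indicator (C n x) \<omega> * exp (t * (H (n + Suc m) \<omega> - H n \<omega>))
      = indicator (C (Suc n) x0) \<omega> * f \<omega> + exp t * (indicator (C (Suc n) x1) \<omega> * f \<omega>)"
    if w: "\<omega> \<in> space M" for \<omega>
  proof -
    have Hs: "H (n + Suc m) \<omega> - H n \<omega> = \<xi> (Suc n) \<omega> + (H (Suc n + m) \<omega> - H (Suc n) \<omega>)"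
      using H_Suc[of n \<omega>] by simp
    have ex: "exp (t * (H (n + Suc m) \<omega> - H n \<omega>)) = exp (t * \<xi> (Suc n) \<omega>) * f \<omega>"
      unfolding Hs f_def by (simp add: distrib_left exp_add)
    show ?thesis
      using xi_val[of "Suc n" \<omega>] w unfolding ex x0_def x1_def C_Suc
      by (auto simp: indicator_def C_def)
  qed
  have "(\<integral>\<omega>. indicator (C n x) \<omega> * exp (t * (H (n + Suc m) \<omega> - H n \<omega>)) \<partial>M)
      = (\<integral>\<omega>. indicator (C (Suc n) x0) \<omega> * f \<omega> + exp t * (indicator (C (Suc n) x1) \<omega> * f \<omega>) \<partial>M)"
    by (rule Bochner_Integration.integral_cong[OF refl pt])
  also have "\<dots> = (\<integral>\<omega>. indicator (C (Suc n) x0) \<omega> * f \<omega> \<partial>M)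
      + exp t * (\<integral>\<omega>. indicator (C (Suc n) x1) \<omega> * f \<omega> \<partial>M)"
    using integ[of "Suc n" x0 m] integ[of "Suc n" x1 m] unfolding f_def
    by (subst Bochner_Integration.integral_add) (auto intro: integrable_mult_right)
  also have "\<dots> = measure M (C (Suc n) x0) * Wf a t (bx x0 (Suc n)) m
      + exp t * (measure M (C (Suc n) x1) * Wf a t (bx x1 (Suc n)) m)"
    unfolding f_def using Suc.IH[OF x0v] Suc.IH[OF x1v] by simp
  also have "\<dots> = measure M (C n x) * Wf a t (bx x n) (Suc m)"
    unfolding x0_def x1_def bx_0 bx_1 meas_C0[OF Suc.prems] meas_C1[OF Suc.prems]
    by (simp add: algebra_simps)
  finally show ?case .
qed

lemma expect_W: "(\<integral>\<omega>. exp (t * H m \<omega>) \<partial>M) = Wf a t (\<lambda>_. 0) m"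
proof -
  have "(\<integral>\<omega>. exp (t * H m \<omega>) \<partial>M)
      = (\<integral>\<omega>. indicator (C 0 x) \<omega> * exp (t * (H (0 + m) \<omega> - H 0 \<omega>)) \<partial>M)"
    by (intro Bochner_Integration.integral_cong) (auto simp: C_0 H_0)
  also have "\<dots> = Wf a t (\<lambda>_. 0) m"
    by (subst main_ind) (auto simp: C_0 bx_zero prob_space)
  finally show ?thesis .
qed

end

theorem lemma4p6:
  fixes M :: "'w measure" and a :: "nat \<Rightarrow> real" and \<xi> :: "nat \<Rightarrow> 'w \<Rightarrow> real" and t :: real
  assumes a_pos: "\<And>i. a i > 0"
    and a_summable: "summable a" and a_sum: "(\<Sum>i. a i) < 1"
    and a_moment: "summable (\<lambda>i. real i * a i)"
    and hawkes: "dthp M a \<xi>"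
    and t_nonpos: "t \<le> 0"
  shows "convergent (\<lambda>n. ln (\<integral>\<omega>. exp (t * hawkes_H \<xi> n \<omega>) \<partial>M) / real n)"
proof -
  have ps: "prob_space M" using hawkes by (simp add: dthp_def)
  have kk: "kern a t" unfolding kern_def using a_pos a_summable a_sum t_nonpos by auto
  interpret hawk a t M \<xi>
    unfolding hawk_def hawk_axioms_def using kk ps hawkes by auto
  define f where "f n = ln (Wf a t (\<lambda>_. 0) n)" for n
  have pos: "exp (t * real n) \<le> Wf a t (\<lambda>_. 0) n" for n
    using W_bounds[OF valid_zero] by blast
  have pos': "0 < Wf a t (\<lambda>_. 0) n" for n
    using pos[of n] by (meson exp_gt_zero order_less_le_trans)
  have sub: "f (m + n) \<le> f m + f n" for m n
  proof -
    have "Wf a t (\<lambda>_. 0) (m + n) \<le> Wf a t (\<lambda>_. 0) m * Wf a t (\<lambda>_. 0) n"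
      by (rule W_sub[OF valid_zero])
    then have "ln (Wf a t (\<lambda>_. 0) (m + n)) \<le> ln (Wf a t (\<lambda>_. 0) m * Wf a t (\<lambda>_. 0) n)"
      using pos' by (subst ln_le_cancel_iff) (auto intro: mult_pos_pos)
    then show ?thesis unfolding f_def using pos'[of m] pos'[of n] by (simp add: ln_mult)
  qed
  have lb: "t * real n \<le> f n" for n
  proof -
    have "ln (exp (t * real n)) \<le> ln (Wf a t (\<lambda>_. 0) n)"
      using pos[of n] pos'[of n] by (subst ln_le_cancel_iff) auto
    then show ?thesis by (simp add: f_def)
  qed
  have "convergent (\<lambda>n. f n / real n)" by (rule fekete[OF sub lb])
  moreover have "(\<lambda>n. ln (\<integral>\<omega>. exp (t * hawkes_H \<xi> n \<omega>) \<partial>M) / real n) = (\<lambda>n. f n / real n)"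
    by (intro ext) (simp add: f_def expect_W)
  ultimately show ?thesis by simp
qed

end
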